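(* Let $p>1$ be an integer and let $u^{(p)}$ be the fixed point of the substitution $\varphi_p(L)=L^pS$, $\varphi_p(S)=M$, $\varphi_p(M)=L^{p-1}S$. (i) For every factor $\hat v$ of $u^{(p)}$, $|\hat v|_M\le 1+\frac{|\hat v|-1}{p^2+p}$. (ii) If moreover $\hat v$ has a prefix or a suffix of length greater than or equal to $\Delta$ (a nonnegative integer) that contains no letter $M$, then $|\hat v|_M\le\left\lceil\frac{|\hat v|-\Delta}{p^2+p}\right\rceil$.
   Context: $u^{(p)}=\lim_{n\to\infty}\varphi_p^n(L)$. A factor is a finite contiguous subword; $|w|$ is the length and $|w|_M$ the number of occurrences of $M$ in $w$. *)

theory Defs
  imports Complex_Main
begin

datatype letter = L | S | M

fun phi_letter :: "nat \<Rightarrow> letter \<Rightarrow> letter list" where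
  "phi_letter p L = replicate p L @ [S]"
| "phi_letter p S = [M]"
| "phi_letter p M = replicate (p - 1) L @ [S]"

definition phi :: "nat \<Rightarrow> letter list \<Rightarrow> letter list" where
  "phi p w = concat (map (phi_letter p) w)"

text \<open>u^(p) = lim phi_p^n(L). Since phi_p(L) begins with L, phi_p^n(L) is a prefix of
  phi_p^(n+1)(L) and |phi_p^n(L)| \<ge> 2^n > k for n = k+1, so letter k of the limit is
  letter k of phi_p^(k+1)(L).\<close>
definition u :: "nat \<Rightarrow> nat \<Rightarrow> letter" where
  "u p k = ((phi p ^^ Suc k) [L]) ! k"

definition factor :: "nat \<Rightarrow> letter list \<Rightarrow> bool" where
  "factor p v \<longleftrightarrow> (\<exists>i. v = map (u p) [i..<i + length v])"

definition countM :: "letter list \<Rightarrow> nat" where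
  "countM w = length (filter (\<lambda>x. x = M) w)"

end

theory Submission
  imports Defs
begin

lemma phi_Nil[simp]: "phi p [] = []" by (simp add: phi_def)
lemma phi_Cons[simp]: "phi p (a # w) = phi_letter p a @ phi p w" by (simp add: phi_def)
lemma phi_append[simp]: "phi p (xs @ ys) = phi p xs @ phi p ys" by (simp add: phi_def)

definition W :: "nat \<Rightarrow> nat \<Rightarrow> letter list" where "W p n = (phi p ^^ n) [L]"

lemma W_Suc: "W p (Suc n) = phi p (W p n)" by (simp add: W_def)
lemma W_0: "W p 0 = [L]" by (simp add: W_def)

lemma W_step: assumes "p \<ge> 1" shows "\<exists>t. W p (Suc n) = W p n @ t"
proof (induction n)
  case 0
  have "replicate p L = L # replicate (p-1) L" using assms by (cases p) auto
  then show ?case by (simp add: W_Suc W_0)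
next
  case (Suc n)
  then obtain t where "W p (Suc n) = W p n @ t" by blast
  then have "W p (Suc (Suc n)) = W p (Suc n) @ phi p t" by (simp add: W_Suc)
  then show ?case by blast
qed

lemma W_mono: assumes "p \<ge> 1" "m \<le> n" shows "\<exists>t. W p n = W p m @ t"
  using assms(2)
proof (induction n rule: dec_induct)
  case base then show ?case by auto
next
  case (step n)
  then obtain t where "W p n = W p m @ t" by blast
  moreover obtain t' where "W p (Suc n) = W p n @ t'" using W_step assms(1) by blast
  ultimately show ?case by auto
qed

lemma len_phi: assumes "p \<ge> 2" shows "length (phi p w) \<ge> length w + (if L \<in> set w then 1 else 0)"
proof (induction w)
  case Nil then show ?case by simp
next
  case (Cons a w)
  then show ?case using assms by (cases a) (auto split: if_splits)
qed

lemma len_W: assumes "p \<ge> 2" shows "length (W p n) \<ge> n + 1"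
proof (induction n)
  case 0 then show ?case by (simp add: W_0)
next
  case (Suc n)
  obtain t where "W p n = W p 0 @ t" using W_mono[of p 0 n] assms by auto
  then have "L \<in> set (W p n)" by (simp add: W_0)
  then have "length (phi p (W p n)) \<ge> length (W p n) + 1" using len_phi[OF assms, of "W p n"] by simp
  then show ?case using Suc by (simp add: W_Suc)
qed

lemma u_W: assumes "p \<ge> 2" "Suc k \<le> N" shows "u p k = W p N ! k"
proof -
  have "u p k = W p (Suc k) ! k" by (simp add: u_def W_def)
  moreover obtain t where "W p N = W p (Suc k) @ t" using W_mono[of p "Suc k" N] assms by auto
  moreover have "k < length (W p (Suc k))" using len_W[OF assms(1), of "Suc k"] by simp
  ultimately show ?thesis by (simp add: nth_append)
qed

fun ok :: "letter \<Rightarrow> letter \<Rightarrow> bool" where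
  "ok a b = (\<not>(a = S \<and> b = S) \<and> (b = M \<longrightarrow> a = S))"

fun good :: "letter list \<Rightarrow> bool" where
  "good [] = True"
| "good [a] = True"
| "good (a # b # w) = (ok a b \<and> good (b # w))"

lemma good_append: "good (xs @ ys) = (good xs \<and> good ys \<and> (xs \<noteq> [] \<longrightarrow> ys \<noteq> [] \<longrightarrow> ok (last xs) (hd ys)))"
proof (induction xs rule: good.induct)
  case 1 then show ?case by simp
next
  case (2 a) then show ?case by (cases ys) auto
next
  case (3 a b w) then show ?case by auto
qed

lemma good_rep: "good (replicate k L @ [S])"
proof (induction k)
  case 0 then show ?case by simp
next
  case (Suc k)
  have "replicate (Suc k) L @ [S] = [L] @ (replicate k L @ [S])" by simp
  also have "good \<dots>" using Suc by (subst good_append) (cases k, auto)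
  finally show ?case .
qed

lemma good_phi_letter: "good (phi_letter p a)"
  by (cases a) (auto simp: good_rep)

lemma last_phi_letter: "last (phi_letter p a) = (if a = S then M else S)"
  by (cases a) auto

lemma hd_phi: assumes "p \<ge> 2" shows "hd (phi p (b # w)) = (if b = S then M else L)"
proof -
  have "replicate (p-1) L = L # replicate (p-2) L" using assms by (cases p; cases "p-1") auto
  moreover have "replicate p L = L # replicate (p-1) L" using assms by (cases p) auto
  ultimately show ?thesis by (cases b) auto
qed

lemma phi_letter_ne: "phi_letter p a \<noteq> []" by (cases a) auto

lemma good_phi: assumes "p \<ge> 2" shows "good w \<Longrightarrow> good (phi p w)"
proof (induction w rule: good.induct)
  case 1 then show ?case by simp
next
  case (2 a) then show ?case by (simp add: good_phi_letter)
next
  case (3 a b w)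
  have "phi p (a # b # w) = phi_letter p a @ phi p (b # w)" by simp
  moreover have "good (phi p (b # w))" using 3 by simp
  moreover have "ok (last (phi_letter p a)) (hd (phi p (b # w)))"
    using 3(2) hd_phi[OF assms, of b w] by (cases a; cases b) (auto simp: last_phi_letter)
  ultimately show ?case using good_append phi_letter_ne good_phi_letter
    by (metis list.distinct(1) phi_Cons append_is_Nil_conv)
qed

lemma good_W: assumes "p \<ge> 2" shows "good (W p n)"
  by (induction n) (auto simp: W_0 W_Suc good_phi[OF assms])

definition Mgap :: "nat \<Rightarrow> letter list \<Rightarrow> bool" where
  "Mgap p w \<longleftrightarrow> (\<forall>x y z. w = x @ [M] @ y @ [M] @ z \<longrightarrow> p^2 + p \<le> length y + 1)"

definition Sgap :: "nat \<Rightarrow> letter list \<Rightarrow> bool" where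
  "Sgap p w \<longleftrightarrow> (\<forall>x y z. w = x @ [S] @ y @ [S] @ z \<longrightarrow> p^2 + p \<le> length (phi p y) + 1)"

lemma D1: "phi p w = x @ [M] @ r \<Longrightarrow> \<exists>w1 w2. w = w1 @ [S] @ w2 \<and> x = phi p w1 \<and> r = phi p w2"
proof (induction w arbitrary: x)
  case Nil then show ?case by simp
next
  case (Cons a w)
  then have "phi_letter p a @ phi p w = x @ (M # r)" by simp
  then obtain us where us: "(phi_letter p a = x @ us \<and> us @ phi p w = M # r) \<or> (phi_letter p a @ us = x \<and> phi p w = us @ M # r)"
    by (auto simp: append_eq_append_conv2)
  then show ?case
  proof
    assume h: "phi_letter p a = x @ us \<and> us @ phi p w = M # r"
    show ?thesis
    proof (cases us)
      case Nil
      then obtain w1 w2 where "w = w1 @ [S] @ w2" "[] = phi p w1" "r = phi p w2" using h Cons.IH[of "[]"] by auto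
      then show ?thesis using h Nil by (intro exI[of _ "a # w1"] exI[of _ w2]) auto
    next
      case (Cons c us')
      then have "M \<in> set (phi_letter p a)" using h by auto
      then have "a = S" by (cases a) auto
      then show ?thesis using h Cons by (intro exI[of _ "[]"] exI[of _ w]) (auto simp: Cons_eq_append_conv)
    qed
  next
    assume h: "phi_letter p a @ us = x \<and> phi p w = us @ M # r"
    then obtain w1 w2 where "w = w1 @ [S] @ w2" "us = phi p w1" "r = phi p w2" using Cons.IH[of us] by auto
    then show ?thesis using h by (intro exI[of _ "a # w1"] exI[of _ w2]) auto
  qed
qed

lemma rep_S: "replicate k L @ [S] = x @ S # us \<Longrightarrow> us = [] \<and> x = replicate k L"
proof (induction k arbitrary: x)
  case 0 then show ?case by (cases x) auto
next
  case (Suc k) then show ?case by (cases x) auto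
qed

lemma D2: "phi p w = x @ [S] @ r \<Longrightarrow> \<exists>w1 a w2 t. w = w1 @ [a] @ w2 \<and> a \<noteq> S \<and> x = phi p w1 @ t \<and> phi_letter p a = t @ [S] \<and> r = phi p w2"
proof (induction w arbitrary: x)
  case Nil then show ?case by simp
next
  case (Cons a w)
  then have "phi_letter p a @ phi p w = x @ (S # r)" by simp
  then obtain us where us: "(phi_letter p a = x @ us \<and> us @ phi p w = S # r) \<or> (phi_letter p a @ us = x \<and> phi p w = us @ S # r)"
    by (auto simp: append_eq_append_conv2)
  then show ?case
  proof
    assume h: "phi_letter p a = x @ us \<and> us @ phi p w = S # r"
    show ?thesis
    proof (cases us)
      case Nil
      then obtain w1 b w2 t where "w = w1 @ [b] @ w2" "b \<noteq> S" "[] = phi p w1 @ t" "phi_letter p b = t @ [S]" "r = phi p w2"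
        using h Cons.IH[of "[]"] by auto
      then show ?thesis using h Nil by (intro exI[of _ "a # w1"] exI[of _ b] exI[of _ w2] exI[of _ t]) auto
    next
      case (Cons c us')
      then have c: "c = S" using h by auto
      have "a \<noteq> S" using h Cons c by (cases a) (auto simp: Cons_eq_append_conv)
      then obtain k where k: "phi_letter p a = replicate k L @ [S]" by (cases a) auto
      then have "us' = [] \<and> x = replicate k L" using rep_S[of k x us'] h Cons c by auto
      then show ?thesis using h Cons c k \<open>a \<noteq> S\<close>
        by (intro exI[of _ "[]"] exI[of _ a] exI[of _ w] exI[of _ x]) auto
    qed
  next
    assume h: "phi_letter p a @ us = x \<and> phi p w = us @ S # r"
    then obtain w1 b w2 t where "w = w1 @ [b] @ w2" "b \<noteq> S" "us = phi p w1 @ t" "phi_letter p b = t @ [S]" "r = phi p w2"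
      using Cons.IH[of us] by auto
    then show ?thesis using h by (intro exI[of _ "a # w1"] exI[of _ b] exI[of _ w2] exI[of _ t]) auto
  qed
qed

lemma len_phi_rep: "length (phi p (replicate k L)) = k * (p + 1)"
  by (induction k) auto

lemma len_phi2: assumes "p \<ge> 2" "w \<noteq> []" shows "length (phi p (phi p w)) \<ge> p"
proof -
  obtain c w' where w: "w = c # w'" using assms(2) by (cases w) auto
  have "length (phi p (phi_letter p c)) \<ge> p"
    using assms(1) by (cases c) (auto simp: len_phi_rep)
  then show ?thesis using w by simp
qed

lemma Sgap_phi: assumes "p \<ge> 2" "good w" shows "Sgap p (phi p w)"
  unfolding Sgap_def
proof (intro allI impI)
  fix x y z assume h: "phi p w = x @ [S] @ y @ [S] @ z"
  obtain w1 a w2 t where A: "w = w1 @ [a] @ w2" "a \<noteq> S" "x = phi p w1 @ t" "phi_letter p a = t @ [S]" "phi p w2 = y @ [S] @ z"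
    using D2[of p w x "y @ [S] @ z"] h by auto
  obtain w3 b w4 t' where B: "w2 = w3 @ [b] @ w4" "b \<noteq> S" "y = phi p w3 @ t'" "phi_letter p b = t' @ [S]" "z = phi p w4"
    using D2[of p w2 y z] A(5) by auto
  show "p^2 + p \<le> length (phi p y) + 1"
  proof (cases b)
    case L
    then have "t' = replicate p L" using B(4) by auto
    then have "length (phi p y) \<ge> p * (p+1)" using B(3) by (simp add: len_phi_rep)
    then show ?thesis by (simp add: power2_eq_square algebra_simps)
  next
    case S then show ?thesis using B(2) by simp
  next
    case M
    then have t': "t' = replicate (p-1) L" using B(4) by auto
    have "w3 \<noteq> []"
    proof
      assume "w3 = []"
      then have "w = w1 @ [a, M] @ w4" using A(1) B(1) M by simp
      then have "ok a M" using assms(2) by (simp add: good_append)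
      then show False using A(2) by simp
    qed
    then have "length (phi p (phi p w3)) \<ge> p" using len_phi2 assms(1) by blast
    then have "length (phi p y) \<ge> p + (p-1)*(p+1)" using B(3) t' by (simp add: len_phi_rep)
    moreover have "p + (p-1)*(p+1) + 1 = p^2 + p" using assms(1)
      by (cases p) (auto simp: power2_eq_square algebra_simps)
    ultimately show ?thesis by linarith
  qed
qed

lemma Mgap_phi: assumes "Sgap p w" shows "Mgap p (phi p w)"
  unfolding Mgap_def
proof (intro allI impI)
  fix x y z assume h: "phi p w = x @ [M] @ y @ [M] @ z"
  obtain w1 w2 where A: "w = w1 @ [S] @ w2" "phi p w2 = y @ [M] @ z" using D1[OF h] by auto
  obtain w3 w4 where B: "w2 = w3 @ [S] @ w4" "y = phi p w3" using D1[OF A(2)] by auto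
  show "p^2 + p \<le> length y + 1" using assms A(1) B unfolding Sgap_def by auto
qed

lemma Mgap_infix: "Mgap p (a @ v @ b) \<Longrightarrow> Mgap p v"
  unfolding Mgap_def
proof (intro allI impI)
  fix x y z assume h: "\<forall>x y z. a @ v @ b = x @ [M] @ y @ [M] @ z \<longrightarrow> p^2 + p \<le> length y + 1"
    and v: "v = x @ [M] @ y @ [M] @ z"
  show "p^2 + p \<le> length y + 1" using h[rule_format, of "a @ x" y "z @ b"] v by simp
qed

lemma countM_append[simp]: "countM (xs @ ys) = countM xs + countM ys" by (simp add: countM_def)
lemma countM_Cons[simp]: "countM (a # ys) = (if a = M then 1 else 0) + countM ys" by (simp add: countM_def)
lemma countM_Nil[simp]: "countM [] = 0" by (simp add: countM_def)
lemma countM_0: "M \<notin> set w \<Longrightarrow> countM w = 0" by (induction w) auto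
lemma countM_pos: "M \<in> set w \<Longrightarrow> countM w \<ge> 1"
  by (induction w) auto

lemma count_bound: "Mgap p v \<Longrightarrow> M \<in> set v \<Longrightarrow> (countM v - 1) * (p^2 + p) + 1 \<le> length v"
proof (induction "length v" arbitrary: v rule: less_induct)
  case less
  obtain y z where v: "v = y @ M # z" "M \<notin> set y" using split_list_first[OF less.prems(2)] by blast
  show ?case
  proof (cases "M \<in> set z")
    case False
    then have "countM v = 1" using v by (simp add: countM_0)
    then show ?thesis using v by simp
  next
    case True
    obtain y2 z2 where z: "z = y2 @ M # z2" "M \<notin> set y2" using split_list_first[OF True] by blast
    have vv: "v = y @ [M] @ y2 @ [M] @ z2" using v z by simp
    have g: "p^2 + p \<le> length y2 + 1" using less.prems(1) vv unfolding Mgap_def by blast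
    have mg: "Mgap p (M # z2)" using Mgap_infix[of p "y @ M # y2" "M # z2" "[]"] less.prems(1) v z by simp
    have IH: "(countM (M # z2) - 1) * (p^2 + p) + 1 \<le> length (M # z2)"
      using less.hyps[of "M # z2"] mg v z by simp
    have c: "countM v = 2 + countM z2" using v z by (simp add: countM_0)
    have "(countM v - 1) * (p^2 + p) = countM z2 * (p^2 + p) + (p^2+p)"
      using c by (simp add: algebra_simps)
    moreover have "length v = length y + length y2 + length z2 + 2" using vv by simp
    moreover have "countM z2 * (p^2 + p) \<le> length z2" using IH by simp
    ultimately show ?thesis using g by linarith
  qed
qed

lemma map_nth_upt: "i + n \<le> length xs \<Longrightarrow> map (\<lambda>k. xs ! k) [i..<i+n] = take n (drop i xs)"
  by (rule nth_equalityI) auto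

theorem mainTheorem7:
  fixes p :: nat and v :: "letter list" and \<Delta> :: nat
  assumes "p > 1" and "factor p v"
  shows "real (countM v) \<le> 1 + (real (length v) - 1) / real (p^2 + p)
     \<and> ((\<exists>w. ((\<exists>z. v = w @ z) \<or> (\<exists>z. v = z @ w)) \<and> length w \<ge> \<Delta> \<and> M \<notin> set w)
          \<longrightarrow> real (countM v) \<le> real_of_int \<lceil>(real (length v) - real \<Delta>) / real (p^2 + p)\<rceil>)"
proof -
  have p2: "p \<ge> 2" using assms(1) by simp
  obtain i where vi: "v = map (u p) [i..<i + length v]" using assms(2) unfolding factor_def by blast
  define N where "N = i + length v + 2"
  have "map (u p) [i..<i + length v] = map (\<lambda>k. W p N ! k) [i..<i + length v]"
    by (rule map_cong) (auto simp: u_W[OF p2] N_def)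
  moreover have "i + length v \<le> length (W p N)" using len_W[OF p2, of N] N_def by simp
  ultimately have vt: "v = take (length v) (drop i (W p N))" using vi map_nth_upt by metis
  have "W p N = take i (W p N) @ take (length v) (drop i (W p N)) @ drop (length v) (drop i (W p N))"
    by (metis append_take_drop_id)
  then have WN: "W p N = take i (W p N) @ v @ drop (length v) (drop i (W p N))"
    using vt by simp
  have "W p N = phi p (phi p (W p (i + length v)))" by (simp add: N_def W_Suc)
  then have "Mgap p (W p N)" using Mgap_phi Sgap_phi[OF p2 good_W[OF p2]] by simp
  then have mg: "Mgap p v" using Mgap_infix WN by metis
  define d where "d = p^2 + p"
  have dpos: "d \<ge> 1" using p2 by (simp add: d_def)
  have key: "\<And>z. Mgap p z \<Longrightarrow> M \<in> set z \<Longrightarrow> real (countM z) - 1 \<le> (real (length z) - 1) / real d"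
  proof -
    fix z assume a: "Mgap p z" "M \<in> set z"
    have "(countM z - 1) * d + 1 \<le> length z" using count_bound[OF a] by (simp add: d_def)
    moreover have "countM z \<ge> 1" using countM_pos a(2) by simp
    ultimately have "(real (countM z) - 1) * real d \<le> real (length z) - 1"
      by (metis (no_types, lifting) Nat.le_diff_conv2 of_nat_1 of_nat_diff of_nat_le_iff of_nat_mult le_add2 le_trans)
    then show "real (countM z) - 1 \<le> (real (length z) - 1) / real d"
      using dpos by (simp add: field_simps)
  qed
  have part1: "real (countM v) \<le> 1 + (real (length v) - 1) / real d"
  proof (cases "M \<in> set v")
    case True then show ?thesis using key[OF mg] by simp
  next
    case False
    then have "countM v = 0" by (simp add: countM_0)
    moreover have "(real (length v) - 1) / real d \<ge> -1"
      using dpos by (simp add: field_simps)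
    ultimately show ?thesis by simp
  qed
  have part2: "real (countM v) \<le> real_of_int \<lceil>(real (length v) - real \<Delta>) / real d\<rceil>"
    if "\<exists>w. ((\<exists>z. v = w @ z) \<or> (\<exists>z. v = z @ w)) \<and> length w \<ge> \<Delta> \<and> M \<notin> set w"
  proof -
    from that obtain w z where wz: "v = w @ z \<or> v = z @ w" "length w \<ge> \<Delta>" "M \<notin> set w" by blast
    have mz: "Mgap p z" using wz(1) mg Mgap_infix[of p "[]" z w] Mgap_infix[of p w z "[]"] by auto
    have cz: "countM v = countM z" using wz by (auto simp: countM_0)
    have lz: "length z + \<Delta> \<le> length v" using wz by auto
    show ?thesis
    proof (cases "M \<in> set z")
      case True
      have "real (countM z) - 1 \<le> (real (length z) - 1) / real d" using key[OF mz True] .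
      also have "\<dots> < (real (length v) - real \<Delta>) / real d"
        using dpos lz by (simp add: divide_strict_right_mono)
      finally have "int (countM z) - 1 < (real (length v) - real \<Delta>) / real d" by simp
      then have "int (countM z) \<le> \<lceil>(real (length v) - real \<Delta>) / real d\<rceil>"
        by (simp add: le_ceiling_iff)
      then show ?thesis using cz by linarith
    next
      case False
      then have "countM v = 0" using cz by (simp add: countM_0)
      moreover have "(real (length v) - real \<Delta>) / real d \<ge> 0" using lz by simp
      ultimately show ?thesis by simp
    qed
  qed
  show ?thesis using part1 part2 by (simp add: d_def)
qed

end
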